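(* Let $n\ge2$, $A\in\mathbb{R}^{n\times n}$ symmetric with eigenvalues $\lambda_1\ge\dots\ge\lambda_n$, $\rho=\lambda_1-\lambda_n$, and suppose $\delta:=\lambda_{n-1}-\lambda_n>0$. Let $\gamma>0$ and $0<\beta\le\big[2(\frac73+\gamma)+(\frac23+\gamma)\frac{\rho}{\delta}\big]^{-1}\delta$. Then $f(\mathbf{z})=\frac12\mathbf{z}^TA\mathbf{z}+\frac{\beta}{2}\sum_kz_k^4$ on $\mathbb{S}^{n-1}$ is $(\gamma\beta,\gamma\beta,\gamma\beta)$-strict-saddle.
   Context: $\mathbb{S}^{n-1}$ is the unit sphere in $\mathbb{R}^n$, $\mathcal{T}_{\mathbf{z}}=\{\mathbf{v}:\mathbf{v}^T\mathbf{z}=0\}$. For $\mathbf{z}\in\mathbb{S}^{n-1}$ let $2\lambda=\mathbf{z}^TA\mathbf{z}+2\beta\|\mathbf{z}\|_4^4$, $\mathrm{grad} f(\mathbf{z})=[A+2\beta\,\mathrm{diag}(z_1^2,\dots,z_n^2)]\mathbf{z}-2\lambda\mathbf{z}$, and $H_f(\mathbf{z})[\mathbf{v}]=\mathbf{v}^T[A+6\beta\,\mathrm{diag}(z_1^2,\dots,z_n^2)-2\lambda I]\mathbf{v}$. For $\xi,\epsilon,\zeta>0$, $f$ is $(\xi,\epsilon,\zeta)$-strict-saddle if for every $\mathbf{z}\in\mathbb{S}^{n-1}$ at least one holds: (1) $H_f(\mathbf{z})[\mathbf{v}]\ge\xi$ for all $\mathbf{v}\in\mathcal{T}_{\mathbf{z}}\cap\mathbb{S}^{n-1}$;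 (2) $\|\mathrm{grad} f(\mathbf{z})\|\ge\epsilon$; (3) there is $\mathbf{v}\in\mathcal{T}_{\mathbf{z}}\cap\mathbb{S}^{n-1}$ with $H_f(\mathbf{z})[\mathbf{v}]\le-\zeta$. *)

theory Defs
  imports "Jordan_Normal_Form.Char_Poly" "HOL-Computational_Algebra.Polynomial"
begin

text \<open>Eigenvalues of a square real matrix, with multiplicity (roots of the characteristic
  polynomial), sorted in non-increasing order: eigs A ! 0 = lambda_1 \<ge> ... \<ge> eigs A ! (n-1) = lambda_n.\<close>
definition eigs :: "real mat \<Rightarrow> real list" where
  "eigs A = rev (sorted_list_of_multiset (proots (char_poly A)))"

definition unit_sphere :: "nat \<Rightarrow> real vec set" where
  "unit_sphere n = {z. z \<in> carrier_vec n \<and> z \<bullet> z = 1}"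

definition tangent :: "real vec \<Rightarrow> real vec set" where
  "tangent z = {v. v \<in> carrier_vec (dim_vec z) \<and> v \<bullet> z = 0}"

definition fobj :: "real mat \<Rightarrow> real \<Rightarrow> real vec \<Rightarrow> real" where
  "fobj A \<beta> z = (1/2) * (z \<bullet> (A *\<^sub>v z)) + (\<beta>/2) * (\<Sum>k<dim_vec z. (z $ k) ^ 4)"

definition two_lambda :: "real mat \<Rightarrow> real \<Rightarrow> real vec \<Rightarrow> real" where
  "two_lambda A \<beta> z = z \<bullet> (A *\<^sub>v z) + 2 * \<beta> * (\<Sum>k<dim_vec z. (z $ k) ^ 4)"

definition grad_f :: "real mat \<Rightarrow> real \<Rightarrow> real vec \<Rightarrow> real vec" where
  "grad_f A \<beta> z = (A + 2 * \<beta> \<cdot>\<^sub>m mat_diag (dim_vec z) (\<lambda>k. (z $ k)^2)) *\<^sub>v z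
                   - two_lambda A \<beta> z \<cdot>\<^sub>v z"

definition hess_f :: "real mat \<Rightarrow> real \<Rightarrow> real vec \<Rightarrow> real vec \<Rightarrow> real" where
  "hess_f A \<beta> z v = v \<bullet> ((A + 6 * \<beta> \<cdot>\<^sub>m mat_diag (dim_vec z) (\<lambda>k. (z $ k)^2)
                          - two_lambda A \<beta> z \<cdot>\<^sub>m 1\<^sub>m (dim_vec z)) *\<^sub>v v)"

definition strict_saddle :: "nat \<Rightarrow> real mat \<Rightarrow> real \<Rightarrow> real \<Rightarrow> real \<Rightarrow> real \<Rightarrow> bool" where
  "strict_saddle n A \<beta> \<xi> \<epsilon> \<zeta> \<longleftrightarrow>
     (\<forall>z \<in> unit_sphere n.
        (\<forall>v \<in> tangent z \<inter> unit_sphere n. hess_f A \<beta> z v \<ge> \<xi>)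
      \<or> sqrt (grad_f A \<beta> z \<bullet> grad_f A \<beta> z) \<ge> \<epsilon>
      \<or> (\<exists>v \<in> tangent z \<inter> unit_sphere n. hess_f A \<beta> z v \<le> - \<zeta>))"

end

theory Submission
  imports Defs
begin

lemma sym_real_eigen:
  fixes A :: "real mat"
  assumes A: "A \<in> carrier_mat n n" and sym: "A\<^sup>T = A" and n: "n > 0"
  shows "\<exists>\<mu> v. v \<in> carrier_vec n \<and> v \<noteq> 0\<^sub>v n \<and> A *\<^sub>v v = \<mu> \<cdot>\<^sub>v v"
proof -
  define AC where "AC = map_mat complex_of_real A"
  have AC: "AC \<in> carrier_mat n n" using A by (simp add: AC_def)
  have cpAC: "char_poly AC = map_poly of_real (char_poly A)"
    unfolding AC_def using of_real_hom.char_poly_hom[OF A] by simp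
  obtain as where cp: "char_poly AC = (\<Prod>a\<leftarrow>as. [:- a, 1:])" and las: "length as = n"
    using char_poly_factorized[OF AC] by blast
  define z where "z = as ! 0"
  have zin: "z \<in> set as" using las n unfolding z_def by auto
  have "poly (char_poly AC) z = 0"
    unfolding cp poly_prod_list using zin
    by (auto simp: prod_list_zero_iff)
  hence "eigenvalue AC z" using eigenvalue_root_char_poly[OF AC] by simp
  then obtain v where ev: "eigenvector AC v z" unfolding eigenvalue_def by blast
  have v: "v \<in> carrier_vec n" and v0: "v \<noteq> 0\<^sub>v n" and Av: "AC *\<^sub>v v = z \<cdot>\<^sub>v v"
    using ev AC unfolding eigenvector_def by auto
  define s where "s = (\<Sum>i<n. \<Sum>j<n. cnj (v $ i) * of_real (A $$ (i,j)) * v $ j)"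
  have row: "(\<Sum>j<n. of_real (A $$ (i,j)) * v $ j) = z * v $ i" if i: "i < n" for i
  proof -
    have "(AC *\<^sub>v v) $ i = z * v $ i" using Av i v by simp
    moreover have "(AC *\<^sub>v v) $ i = (\<Sum>j<n. of_real (A $$ (i,j)) * v $ j)"
      using i v A unfolding AC_def by (auto simp: mult_mat_vec_def scalar_prod_def row_def lessThan_atLeast0)
    ultimately show ?thesis by simp
  qed
  define N where "N = (\<Sum>i<n. cnj (v $ i) * v $ i)"
  have sN: "s = z * N"
  proof -
    have "s = (\<Sum>i<n. cnj (v $ i) * (\<Sum>j<n. of_real (A $$ (i,j)) * v $ j))"
      unfolding s_def by (simp add: sum_distrib_left mult.assoc)
    also have "\<dots> = (\<Sum>i<n. cnj (v $ i) * (z * v $ i))" using row by simp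
    also have "\<dots> = z * N" unfolding N_def by (simp add: sum_distrib_left algebra_simps)
    finally show ?thesis .
  qed
  have cs: "cnj s = s"
  proof -
    have "cnj s = (\<Sum>i<n. \<Sum>j<n. v $ i * of_real (A $$ (i,j)) * cnj (v $ j))"
      unfolding s_def by (simp add: cnj_sum)
    also have "\<dots> = (\<Sum>j<n. \<Sum>i<n. v $ i * of_real (A $$ (i,j)) * cnj (v $ j))"
      by (rule sum.swap)
    also have "\<dots> = s" unfolding s_def
    proof (rule sum.cong[OF refl], rule sum.cong[OF refl])
      fix i j assume i: "i \<in> {..<n}" and j: "j \<in> {..<n}"
      have "A $$ (j,i) = A $$ (i,j)"
        using i j A sym by (metis carrier_matD(1,2) index_transpose_mat(1) lessThan_iff)
      then show "v $ j * of_real (A $$ (j,i)) * cnj (v $ i) = cnj (v $ i) * of_real (A $$ (i,j)) * v $ j"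
        by simp
    qed
    finally show ?thesis .
  qed
  have NR: "N = of_real (\<Sum>i<n. (cmod (v $ i))^2)"
    unfolding N_def of_real_sum by (rule sum.cong, auto simp: complex_norm_square[symmetric] complex_mult_cnj mult.commute)
  have Npos: "(\<Sum>i<n. (cmod (v $ i))^2) > 0"
  proof -
    obtain i where i: "i < n" "v $ i \<noteq> 0" using v0 v by (metis carrier_vecD eq_vecI index_zero_vec(1,2))
    have "(cmod (v $ i))^2 \<le> (\<Sum>i<n. (cmod (v $ i))^2)"
      by (rule member_le_sum) (use i in auto)
    moreover have "(cmod (v $ i))^2 > 0" using i by simp
    ultimately show ?thesis by linarith
  qed
  have "Im s = 0" using cs by (metis cnj.sel(2) neg_equal_zero)
  hence "Im z = 0" using sN NR Npos by simp
  define \<mu> where "\<mu> = Re z"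
  have z\<mu>: "z = of_real \<mu>" using \<open>Im z = 0\<close> unfolding \<mu>_def by (simp add: complex_eq_iff)
  have "poly (char_poly A) \<mu> = 0"
    using \<open>poly (char_poly AC) z = 0\<close> unfolding cpAC z\<mu> of_real_hom.poly_map_poly by simp
  hence "eigenvalue A \<mu>" using eigenvalue_root_char_poly[OF A] by simp
  then obtain u where "eigenvector A u \<mu>" unfolding eigenvalue_def by blast
  thus ?thesis using A unfolding eigenvector_def by auto
qed

definition outer :: "nat \<Rightarrow> real vec \<Rightarrow> real mat" where
  "outer n w = mat n n (\<lambda>(i,j). w $ i * w $ j)"

lemma smult_mat_vec: assumes "A \<in> carrier_mat nr nc" "v \<in> carrier_vec nc"
  shows "(k \<cdot>\<^sub>m A) *\<^sub>v v = k \<cdot>\<^sub>v (A *\<^sub>v v)"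
  by (rule eq_vecI, insert assms, auto simp: mult_mat_vec_def scalar_prod_def row_def sum_distrib_left ac_simps)

lemma outer_carrier[simp]: "outer n w \<in> carrier_mat n n" by (simp add: outer_def)

lemma outer_mult_vec: assumes w: "w \<in> carrier_vec n" and x: "x \<in> carrier_vec n"
  shows "outer n w *\<^sub>v x = (w \<bullet> x) \<cdot>\<^sub>v w"
  by (rule eq_vecI, insert w x, auto simp: outer_def mult_mat_vec_def scalar_prod_def row_def sum_distrib_left ac_simps)

lemma outer_mult: assumes w: "w \<in> carrier_vec n"
  shows "outer n w * outer n w = (w \<bullet> w) \<cdot>\<^sub>m outer n w"
proof (rule eq_matI)
  fix i j assume i: "i < dim_row ((w \<bullet> w) \<cdot>\<^sub>m outer n w)" and j: "j < dim_col ((w \<bullet> w) \<cdot>\<^sub>m outer n w)"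
  hence i: "i < n" and j: "j < n" by (auto simp: outer_def)
  have "(outer n w * outer n w) $$ (i,j) = (\<Sum>k = 0..<n. w $ i * w $ k * (w $ k * w $ j))"
    using i j by (simp add: outer_def times_mat_def scalar_prod_def row_def col_def)
  also have "\<dots> = (\<Sum>k = 0..<n. w $ k * w $ k * (w $ i * w $ j))"
    by (rule sum.cong, auto simp: ac_simps)
  also have "\<dots> = (w \<bullet> w) * (w $ i * w $ j)"
    using w by (simp add: scalar_prod_def sum_distrib_right)
  finally show "(outer n w * outer n w) $$ (i,j) = ((w \<bullet> w) \<cdot>\<^sub>m outer n w) $$ (i,j)"
    using i j by (simp add: outer_def)
qed (auto simp: outer_def)

lemma outer_transpose[simp]: "(outer n w)\<^sup>T = outer n w"
  by (rule eq_matI, auto simp: outer_def)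

lemma householder:
  fixes u :: "real vec"
  assumes u: "u \<in> carrier_vec (Suc n)" and uu: "u \<bullet> u = 1" and u0: "u $ 0 \<le> 0"
  shows "\<exists>H. H \<in> carrier_mat (Suc n) (Suc n) \<and> H\<^sup>T = H \<and> H * H = 1\<^sub>m (Suc n) \<and> H *\<^sub>v unit_vec (Suc n) 0 = u"
proof -
  let ?N = "Suc n"
  define e :: "real vec" where "e = unit_vec ?N 0"
  define w where "w = u - e"
  have e: "e \<in> carrier_vec ?N" by (simp add: e_def)
  have w: "w \<in> carrier_vec ?N" using u by (simp add: w_def e_def)
  have ue: "u \<bullet> e = u $ 0" using u unfolding e_def by (simp add: scalar_prod_right_unit) 
  have ee: "e \<bullet> e = 1" unfolding e_def by simp
  have eu: "e \<bullet> u = u $ 0" using ue u e by (simp add: comm_scalar_prod)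
  have ww: "w \<bullet> w = 2 - 2 * u $ 0"
    unfolding w_def using u e uu ue eu ee
    by (simp add: minus_scalar_prod_distrib scalar_prod_minus_distrib)
  have wpos: "w \<bullet> w > 0" using ww u0 by simp
  have we: "w \<bullet> e = u $ 0 - 1" unfolding w_def using u e ue ee by (simp add: minus_scalar_prod_distrib)
  define c where "c = 2 / (w \<bullet> w)"
  define H where "H = 1\<^sub>m ?N - c \<cdot>\<^sub>m outer ?N w"
  have H: "H \<in> carrier_mat ?N ?N" unfolding H_def by (rule minus_carrier_mat, simp)
  have HT: "H\<^sup>T = H" unfolding H_def by (rule eq_matI, auto simp: outer_def)
  have HH: "H * H = 1\<^sub>m ?N"
  proof -
    let ?O = "outer ?N w"
    have O: "?O \<in> carrier_mat ?N ?N" by simp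
    have cw: "c * (w \<bullet> w) = 2" using wpos unfolding c_def by simp
    have cO: "c \<cdot>\<^sub>m ?O \<in> carrier_mat ?N ?N" by simp
    have "H * H = 1\<^sub>m ?N * H - (c \<cdot>\<^sub>m ?O) * H"
      by (subst (1) H_def, rule minus_mult_distrib_mat[OF one_carrier_mat cO H])
    also have "1\<^sub>m ?N * H = H" using H by simp
    also have "(c \<cdot>\<^sub>m ?O) * H = (c \<cdot>\<^sub>m ?O) * 1\<^sub>m ?N - (c \<cdot>\<^sub>m ?O) * (c \<cdot>\<^sub>m ?O)"
      unfolding H_def by (rule mult_minus_distrib_mat[OF cO one_carrier_mat cO])
    also have "(c \<cdot>\<^sub>m ?O) * 1\<^sub>m ?N = c \<cdot>\<^sub>m ?O" using cO by (rule right_mult_one_mat)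
    also have "H - (c \<cdot>\<^sub>m ?O - (c \<cdot>\<^sub>m ?O) * (c \<cdot>\<^sub>m ?O)) = (1\<^sub>m ?N - c \<cdot>\<^sub>m ?O) - (c \<cdot>\<^sub>m ?O - (c \<cdot>\<^sub>m ?O) * (c \<cdot>\<^sub>m ?O))"
      unfolding H_def ..
    also have "(c \<cdot>\<^sub>m ?O) * (c \<cdot>\<^sub>m ?O) = (c * c * (w \<bullet> w)) \<cdot>\<^sub>m ?O"
    proof -
      have "(c \<cdot>\<^sub>m ?O) * (c \<cdot>\<^sub>m ?O) = c \<cdot>\<^sub>m (?O * (c \<cdot>\<^sub>m ?O))"
        by (rule mult_smult_assoc_mat[OF O cO])
      also have "?O * (c \<cdot>\<^sub>m ?O) = c \<cdot>\<^sub>m (?O * ?O)" by (rule mult_smult_distrib[OF O O])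
      also have "?O * ?O = (w \<bullet> w) \<cdot>\<^sub>m ?O" by (rule outer_mult[OF w])
      finally show ?thesis by (auto intro!: eq_matI simp: outer_def)
    qed
    also have "(1\<^sub>m ?N - c \<cdot>\<^sub>m ?O) - (c \<cdot>\<^sub>m ?O - (c * c * (w \<bullet> w)) \<cdot>\<^sub>m ?O) = 1\<^sub>m ?N"
    proof (rule eq_matI)
      fix i j assume "i < dim_row (1\<^sub>m ?N)" "j < dim_col (1\<^sub>m ?N)"
      then show "(1\<^sub>m ?N - c \<cdot>\<^sub>m ?O - (c \<cdot>\<^sub>m ?O - (c * c * (w \<bullet> w)) \<cdot>\<^sub>m ?O)) $$ (i, j) = 1\<^sub>m ?N $$ (i, j)"
        using cw by (simp add: outer_def algebra_simps)
    qed (auto simp: outer_def)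
    finally show ?thesis .
  qed
  have "H *\<^sub>v e = e - c \<cdot>\<^sub>v ((w \<bullet> e) \<cdot>\<^sub>v w)"
    unfolding H_def using e w
    by (simp add: minus_mult_distrib_mat_vec[of _ ?N ?N] smult_mat_vec[of _ ?N ?N] outer_mult_vec)
  also have "\<dots> = u"
  proof (rule eq_vecI)
    fix i assume i: "i < dim_vec u"
    have ce: "c * (w \<bullet> e) = -1" using we ww wpos unfolding c_def by (simp add: field_simps)
    have wi: "w $ i = u $ i - e $ i" using i u e by (simp add: w_def)
    have "c * ((w \<bullet> e) * w $ i) = - w $ i" using ce by (metis mult.assoc mult_minus1)
    then show "(e - c \<cdot>\<^sub>v ((w \<bullet> e) \<cdot>\<^sub>v w)) $ i = u $ i"
      using i u e w wi by simp
  qed (use u e w in auto)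
  finally show ?thesis using H HT HH e_def by blast
qed
definition diag_ok :: "nat \<Rightarrow> real mat \<Rightarrow> bool" where
  "diag_ok n D = (\<forall>i<n. \<forall>j<n. i \<noteq> j \<longrightarrow> D $$ (i,j) = 0)"

lemma spectral:
  fixes A :: "real mat"
  assumes "A \<in> carrier_mat n n" "A\<^sup>T = A"
  shows "\<exists>U D. U \<in> carrier_mat n n \<and> D \<in> carrier_mat n n \<and> U\<^sup>T * U = 1\<^sub>m n \<and> diag_ok n D \<and> A = U * D * U\<^sup>T"
  using assms
proof (induct n arbitrary: A)
  case 0
  show ?case
    by (rule exI[of _ "1\<^sub>m 0"], rule exI[of _ A], insert 0, auto simp: diag_ok_def)
next
  case (Suc n A)
  let ?N = "Suc n"
  have A: "A \<in> carrier_mat ?N ?N" and sym: "A\<^sup>T = A" using Suc by auto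
  obtain \<mu> v where v: "v \<in> carrier_vec ?N" and v0: "v \<noteq> 0\<^sub>v ?N" and Av: "A *\<^sub>v v = \<mu> \<cdot>\<^sub>v v"
    using sym_real_eigen[OF A sym] by auto
  have vv: "v \<bullet> v > 0" using conjugate_square_greater_0_vec[OF v] v0 by simp
  define \<sigma> where "\<sigma> = (if v $ 0 \<le> 0 then 1 else -1) / sqrt (v \<bullet> v)"
  define u where "u = \<sigma> \<cdot>\<^sub>v v"
  have u: "u \<in> carrier_vec ?N" using v by (simp add: u_def)
  have uu: "u \<bullet> u = 1" using v vv unfolding u_def \<sigma>_def
    by (simp add: power2_eq_square[symmetric] real_sqrt_pow2 abs_if)
  have u0: "u $ 0 \<le> 0" using v vv unfolding u_def \<sigma>_def
    by (auto simp: divide_nonpos_pos divide_nonneg_pos mult_le_0_iff)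
  have Au: "A *\<^sub>v u = \<mu> \<cdot>\<^sub>v u" unfolding u_def using A v Av
    by (simp add: mult_mat_vec smult_smult_assoc mult.commute)
  obtain H where H: "H \<in> carrier_mat ?N ?N" and HT: "H\<^sup>T = H" and HH: "H * H = 1\<^sub>m ?N"
    and He: "H *\<^sub>v unit_vec ?N 0 = u"
    using householder[OF u uu u0] by blast
  define e :: "real vec" where "e = unit_vec ?N 0"
  have e: "e \<in> carrier_vec ?N" by (simp add: e_def)
  have Hu: "H *\<^sub>v u = e"
    unfolding He[symmetric] e_def using H
    by (simp add: assoc_mult_mat_vec[symmetric, of _ ?N ?N _ ?N] HH)
  define B where "B = H * A * H"
  have B: "B \<in> carrier_mat ?N ?N" using H A by (simp add: B_def)
  have BT: "B\<^sup>T = B" unfolding B_def using H A HT sym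
    by (simp add: transpose_mult[of _ ?N ?N _ ?N] assoc_mult_mat[of _ ?N ?N _ ?N _ ?N])
  have Be: "B *\<^sub>v e = \<mu> \<cdot>\<^sub>v e"
  proof -
    have "B *\<^sub>v e = H *\<^sub>v (A *\<^sub>v (H *\<^sub>v e))" unfolding B_def using H A e
      by (simp add: assoc_mult_mat_vec[of _ ?N ?N _ ?N])
    also have "H *\<^sub>v e = u" using He e_def by simp
    also have "H *\<^sub>v (A *\<^sub>v u) = \<mu> \<cdot>\<^sub>v e" using Au Hu H u by (simp add: mult_mat_vec)
    finally show ?thesis .
  qed
  have Bcol: "B $$ (i,0) = (if i = 0 then \<mu> else 0)" if i: "i < ?N" for i
  proof -
    have "(B *\<^sub>v e) $ i = B $$ (i,0)" using i B unfolding e_def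
      by (simp add: scalar_prod_right_unit)
    with Be show ?thesis using i by (cases "i = 0", auto simp: e_def)
  qed
  have Brow: "B $$ (0,j) = (if j = 0 then \<mu> else 0)" if j: "j < ?N" for j
  proof -
    have "B $$ (0,j) = B\<^sup>T $$ (j,0)" using j B by simp
    with BT Bcol[OF j] show ?thesis by simp
  qed
  define A' where "A' = mat n n (\<lambda>(i,j). B $$ (Suc i, Suc j))"
  have A': "A' \<in> carrier_mat n n" by (simp add: A'_def)
  have A'T: "A'\<^sup>T = A'"
  proof (rule eq_matI)
    fix i j assume "i < dim_row A'" "j < dim_col A'"
    hence ij: "i < n" "j < n" by (auto simp: A'_def)
    have "B $$ (Suc j, Suc i) = B\<^sup>T $$ (Suc i, Suc j)" using ij B by simp
    then show "A'\<^sup>T $$ (i,j) = A' $$ (i,j)" using ij BT by (simp add: A'_def)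
  qed (auto simp: A'_def)
  obtain U' D' where U': "U' \<in> carrier_mat n n" and D': "D' \<in> carrier_mat n n"
    and U'U': "U'\<^sup>T * U' = 1\<^sub>m n" and dD': "diag_ok n D'" and A'eq: "A' = U' * D' * U'\<^sup>T"
    using Suc(1)[OF A' A'T] by blast
  define M1 :: "real mat" where "M1 = mat 1 1 (\<lambda>_. \<mu>)"
  have M1: "M1 \<in> carrier_mat 1 1" by (simp add: M1_def)
  define U1 where "U1 = four_block_mat (1\<^sub>m 1) (0\<^sub>m 1 n) (0\<^sub>m n 1) U'"
  define D1 where "D1 = four_block_mat M1 (0\<^sub>m 1 n) (0\<^sub>m n 1) D'"
  have U1: "U1 \<in> carrier_mat ?N ?N" unfolding U1_def
    using four_block_carrier_mat[OF one_carrier_mat U'] by (metis plus_1_eq_Suc)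
  have "True"
    by simp
  have D1: "D1 \<in> carrier_mat ?N ?N" unfolding D1_def
    using four_block_carrier_mat[OF M1 D'] by (metis plus_1_eq_Suc)
  have "True"
    by simp
  have Bblk: "B = four_block_mat M1 (0\<^sub>m 1 n) (0\<^sub>m n 1) A'"
  proof (rule eq_matI)
    fix i j assume ij: "i < dim_row (four_block_mat M1 (0\<^sub>m 1 n) (0\<^sub>m n 1) A')"
      "j < dim_col (four_block_mat M1 (0\<^sub>m 1 n) (0\<^sub>m n 1) A')"
    hence ij: "i < ?N" "j < ?N" using M1 A' by auto
    show "B $$ (i,j) = four_block_mat M1 (0\<^sub>m 1 n) (0\<^sub>m n 1) A' $$ (i,j)"
    proof (cases "i = 0")
      case True
      then show ?thesis using ij Brow[OF ij(2)] M1 A' by (auto simp: M1_def)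
    next
      case False
      then obtain i' where i': "i = Suc i'" by (cases i) auto
      show ?thesis
      proof (cases "j = 0")
        case True
        then show ?thesis using ij Bcol[OF ij(1)] M1 A' i' by (auto simp: M1_def)
      next
        case False
        then obtain j' where j': "j = Suc j'" by (cases j) auto
        show ?thesis using ij M1 A' i' j' by (auto simp: A'_def)
      qed
    qed
  qed (use B M1 A' in auto)
  have U1T: "U1\<^sup>T = four_block_mat (1\<^sub>m 1) (0\<^sub>m 1 n) (0\<^sub>m n 1) U'\<^sup>T"
    unfolding U1_def using U' by (simp add: transpose_four_block_mat[of _ 1 1 _ n _ n])
  have U1D1: "U1 * D1 = four_block_mat M1 (0\<^sub>m 1 n) (0\<^sub>m n 1) (U' * D')"
    unfolding U1_def D1_def using U' D' M1
    by (simp add: mult_four_block_mat[of _ 1 1 _ n _ n _ _ 1 _ n])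
  have U1DU1: "U1 * D1 * U1\<^sup>T = B"
    unfolding U1D1 U1T Bblk A'eq using U' D' M1
    by (simp add: mult_four_block_mat[of _ 1 1 _ n _ n _ _ 1 _ n])
  have U1U1: "U1\<^sup>T * U1 = 1\<^sub>m ?N"
  proof -
    have "U1\<^sup>T * U1 = four_block_mat (1\<^sub>m 1) (0\<^sub>m 1 n) (0\<^sub>m n 1) (U'\<^sup>T * U')"
      unfolding U1T unfolding U1_def using U'
      by (simp add: mult_four_block_mat[of _ 1 1 _ n _ n _ _ 1 _ n])
    also have "\<dots> = 1\<^sub>m ?N" unfolding U'U' by (rule eq_matI, auto)
    finally show ?thesis .
  qed
  have dD1: "diag_ok ?N D1"
    unfolding diag_ok_def
  proof (intro allI impI)
    fix i j assume ij: "i < ?N" "j < ?N" "i \<noteq> j"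
    show "D1 $$ (i,j) = 0"
    proof (cases "i = 0 \<or> j = 0")
      case True
      then show ?thesis using ij M1 D' unfolding D1_def by auto
    next
      case False
      then show ?thesis using ij M1 D' dD' unfolding D1_def diag_ok_def by auto
    qed
  qed
  define U where "U = H * U1"
  have U: "U \<in> carrier_mat ?N ?N" using H U1 by (simp add: U_def)
  have UT: "U\<^sup>T = U1\<^sup>T * H" unfolding U_def using H U1 HT by (simp add: transpose_mult[of _ ?N ?N _ ?N])
  have UU: "U\<^sup>T * U = 1\<^sub>m ?N"
  proof -
    have "U\<^sup>T * U = U1\<^sup>T * ((H * H) * U1)" unfolding UT unfolding U_def using H U1
      by (simp add: assoc_mult_mat[of _ ?N ?N _ ?N _ ?N])
    also have "\<dots> = 1\<^sub>m ?N" using HH U1 U1U1 by simp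
    finally show ?thesis .
  qed
  have AUDU: "A = U * D1 * U\<^sup>T"
  proof -
    have "U * D1 * U\<^sup>T = H * (U1 * D1 * U1\<^sup>T) * H" unfolding UT unfolding U_def using H U1 D1
      by (simp add: assoc_mult_mat[of _ ?N ?N _ ?N _ ?N])
    also have "\<dots> = (H * H) * A * (H * H)" unfolding U1DU1 B_def using H A
      by (simp add: assoc_mult_mat[of _ ?N ?N _ ?N _ ?N])
    also have "\<dots> = A" using HH A by simp
    finally show ?thesis by simp
  qed
  show ?case using U D1 UU dD1 AUDU by blast
qed

lemma proots_lin_prod: "proots (\<Prod>a\<leftarrow>xs. [:- a, 1:]) = mset (xs :: real list)"
proof (induct xs)
  case Nil then show ?case by simp
next
  case (Cons a xs)
  have nz: "(\<Prod>a\<leftarrow>xs. [:- a, 1:]) \<noteq> (0 :: real poly)"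
  proof -
    have "\<forall>a. [:- a, 1:] \<noteq> (0 :: real poly)" by simp
    then show ?thesis by (auto simp: prod_list_zero_iff)
  qed
  have "proots (\<Prod>a\<leftarrow>a # xs. [:- a, 1:]) = proots ([:- a, 1:] * (\<Prod>a\<leftarrow>xs. [:- a, 1:]))" by simp
  also have "\<dots> = proots [:- a, 1:] + proots (\<Prod>a\<leftarrow>xs. [:- a, 1:])"
    by (rule proots_mult) (use nz in auto)
  finally show ?case using Cons by simp
qed

lemma spectral_facts:
  fixes A :: "real mat"
  assumes A: "A \<in> carrier_mat n n" and sym: "A\<^sup>T = A" and n2: "n \<ge> 2"
  shows "length (eigs A) = n \<and> eigs A ! 0 \<ge> eigs A ! (n-2) \<and>
    (\<exists>u. u \<in> carrier_vec n \<and> u \<bullet> u = 1 \<and> A *\<^sub>v u = eigs A ! (n-1) \<cdot>\<^sub>v u \<and>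
      (\<forall>x \<in> carrier_vec n. x \<bullet> u = 0 \<longrightarrow> x \<bullet> (A *\<^sub>v x) \<ge> eigs A ! (n-2) * (x \<bullet> x)))"
proof -
  obtain U D where U: "U \<in> carrier_mat n n" and D: "D \<in> carrier_mat n n" and UU: "U\<^sup>T * U = 1\<^sub>m n"
    and dD: "diag_ok n D" and AUD: "A = U * D * U\<^sup>T"
    using spectral[OF A sym] by blast
  have UT: "U\<^sup>T \<in> carrier_mat n n" using U by simp
  have UU': "U * U\<^sup>T = 1\<^sub>m n" using mat_mult_left_right_inverse[OF UT U UU] .
  have sim: "similar_mat A D" unfolding similar_mat_def similar_mat_wit_def
    using A U D UU UU' AUD by (intro exI[of _ U] exI[of _ "U\<^sup>T"]) (auto simp: Let_def)
  have ut: "upper_triangular D" using dD D unfolding diag_ok_def upper_triangular_def by auto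
  define \<mu>s where "\<mu>s = diag_mat D"
  have l\<mu>: "length \<mu>s = n" using D by (simp add: \<mu>s_def diag_mat_def)
  have \<mu>i: "\<mu>s ! i = D $$ (i,i)" if "i < n" for i using that D by (simp add: \<mu>s_def diag_mat_def)
  have cp: "char_poly A = (\<Prod>a\<leftarrow>\<mu>s. [:- a, 1:])"
    using char_poly_similar[OF sim] char_poly_upper_triangular[OF D ut] by (simp add: \<mu>s_def)
  define \<nu> where "\<nu> = sort \<mu>s"
  have eigs: "eigs A = rev \<nu>"
    unfolding eigs_def cp proots_lin_prod \<nu>_def by (simp add: sorted_list_of_multiset_mset)
  have l\<nu>: "length \<nu> = n" using l\<mu> by (simp add: \<nu>_def)
  have s\<nu>: "sorted \<nu>" by (simp add: \<nu>_def)
  have m\<nu>: "mset \<nu> = mset \<mu>s" by (simp add: \<nu>_def)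
  have e0: "eigs A ! 0 = \<nu> ! (n-1)" using n2 l\<nu> by (simp add: eigs rev_nth)
  have e1: "eigs A ! (n-1) = \<nu> ! 0" using n2 l\<nu> by (simp add: eigs rev_nth)
  have e2: "eigs A ! (n-2) = \<nu> ! 1" using n2 l\<nu> by (simp add: eigs rev_nth)
  define L where "L = \<nu> ! 0"
  define M where "M = \<nu> ! 1"
  have ge: "eigs A ! 0 \<ge> eigs A ! (n-2)" unfolding e0 e2
    using s\<nu> n2 l\<nu> by (intro sorted_nth_mono) auto
  have "L \<in> set \<mu>s" using n2 l\<nu> m\<nu> unfolding L_def by (metis nth_mem set_mset_mset less_le_trans pos2)
  then obtain i0 where i0: "i0 < n" and \<mu>i0: "\<mu>s ! i0 = L" using l\<mu> by (metis in_set_conv_nth)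
  have Mge: "\<mu>s ! j \<ge> M" if j: "j < n" "j \<noteq> i0" for j
  proof (rule ccontr)
    assume "\<not> \<mu>s ! j \<ge> M"
    hence jM: "\<mu>s ! j < M" by simp
    have LM: "L \<le> M" unfolding L_def M_def using s\<nu> n2 l\<nu> by (intro sorted_nth_mono) auto
    have "\<mu>s ! j \<in> set \<nu>" using j l\<mu> m\<nu> by (metis nth_mem set_mset_mset)
    then obtain k where k: "k < n" "\<nu> ! k = \<mu>s ! j" using l\<nu> by (metis in_set_conv_nth)
    have "L \<le> \<nu> ! k" unfolding L_def using s\<nu> k l\<nu> by (intro sorted_nth_mono) auto
    hence LM: "L < M" using k jM by simp
    have "{i0, j} \<subseteq> {i. i < length \<mu>s \<and> \<mu>s ! i < M}"
      using i0 j jM \<mu>i0 LM l\<mu> by auto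
    hence "card {i0, j} \<le> card {i. i < length \<mu>s \<and> \<mu>s ! i < M}"
      by (intro card_mono) auto
    hence c2: "2 \<le> length (filter (\<lambda>x. x < M) \<mu>s)" using j by (simp add: length_filter_conv_card)
    have "{i. i < length \<nu> \<and> \<nu> ! i < M} \<subseteq> {0}"
    proof
      fix i assume "i \<in> {i. i < length \<nu> \<and> \<nu> ! i < M}"
      hence i: "i < length \<nu>" "\<nu> ! i < M" by auto
      show "i \<in> {0}"
      proof (rule ccontr)
        assume "i \<notin> {0}"
        hence "1 \<le> i" by simp
        hence "\<nu> ! 1 \<le> \<nu> ! i" using s\<nu> i by (intro sorted_nth_mono) auto
        thus False using i unfolding M_def by simp
      qed
    qed
    hence "card {i. i < length \<nu> \<and> \<nu> ! i < M} \<le> 1"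
      using card_mono[of "{0::nat}"] by fastforce
    hence c1: "length (filter (\<lambda>x. x < M) \<nu>) \<le> 1" by (simp add: length_filter_conv_card)
    have "length (filter (\<lambda>x. x < M) \<nu>) = length (filter (\<lambda>x. x < M) \<mu>s)"
      by (metis m\<nu> mset_filter size_mset)
    with c1 c2 show False by simp
  qed
  define u where "u = col U i0"
  have u: "u \<in> carrier_vec n" using U by (simp add: u_def carrier_vecI)
  have uu: "u \<bullet> u = 1"
  proof -
    have "(U\<^sup>T * U) $$ (i0,i0) = 1" using UU i0 by simp
    thus ?thesis using U i0 by (simp add: u_def)
  qed
  have Uunit: "U *\<^sub>v unit_vec n j = col U j" if "j < n" for j
    by (rule eq_vecI, insert U that, auto simp: scalar_prod_right_unit)
  have AU: "A * U = U * D"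
  proof -
    have "A * U = U * D * (U\<^sup>T * U)" unfolding AUD using U D
      by (simp add: assoc_mult_mat[of _ n n _ n _ n])
    also have "\<dots> = U * D" using UU U D by simp
    finally show ?thesis .
  qed
  have colD: "col D i0 = L \<cdot>\<^sub>v unit_vec n i0"
  proof (rule eq_vecI)
    fix i assume "i < dim_vec (L \<cdot>\<^sub>v unit_vec n i0)"
    hence i: "i < n" by simp
    show "col D i0 $ i = (L \<cdot>\<^sub>v unit_vec n i0) $ i"
      using i i0 D dD \<mu>i[OF i0] \<mu>i0 unfolding diag_ok_def by (cases "i = i0") auto
  qed (use D in auto)
  have Au: "A *\<^sub>v u = L \<cdot>\<^sub>v u"
  proof -
    have "A *\<^sub>v u = col (A * U) i0" unfolding u_def by (rule col_mult2[OF A U i0, symmetric])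
    also have "\<dots> = U *\<^sub>v col D i0" unfolding AU by (rule col_mult2[OF U D i0])
    also have "\<dots> = L \<cdot>\<^sub>v (U *\<^sub>v unit_vec n i0)" unfolding colD using U by (simp add: mult_mat_vec)
    also have "\<dots> = L \<cdot>\<^sub>v u" using Uunit[OF i0] u_def by simp
    finally show ?thesis .
  qed
  have quad: "x \<bullet> (A *\<^sub>v x) \<ge> M * (x \<bullet> x)" if x: "x \<in> carrier_vec n" and xu: "x \<bullet> u = 0" for x
  proof -
    define y where "y = U\<^sup>T *\<^sub>v x"
    have y: "y \<in> carrier_vec n" using U x by (simp add: y_def)
    have yi: "y $ i = col U i \<bullet> x" if "i < n" for i using that U x by (simp add: y_def)
    have y0: "y $ i0 = 0" using yi[OF i0] xu x u by (simp add: u_def comm_scalar_prod[of _ n])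
    have "x \<bullet> (A *\<^sub>v x) = x \<bullet> (U *\<^sub>v (D *\<^sub>v y))" unfolding AUD y_def using U D x
      by (simp add: assoc_mult_mat_vec[of _ n n _ n] assoc_mult_mat[of _ n n _ n _ n])
    also have "\<dots> = y \<bullet> (D *\<^sub>v y)" unfolding y_def using U D x
      by (simp add: transpose_vec_mult_scalar[of U n n])
    also have "\<dots> = (\<Sum>i<n. D $$ (i,i) * (y $ i)^2)"
    proof -
      have Dy: "(D *\<^sub>v y) $ i = D $$ (i,i) * y $ i" if i: "i < n" for i
      proof -
        have "(D *\<^sub>v y) $ i = (\<Sum>j\<in>{0..<n}. D $$ (i,j) * y $ j)" using D y i by (simp add: scalar_prod_def)
        also have "\<dots> = (\<Sum>j\<in>{0..<n}. if j = i then D $$ (i,i) * y $ i else 0)"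
          using dD i unfolding diag_ok_def by (intro sum.cong) auto
        also have "\<dots> = D $$ (i,i) * y $ i" using i by simp
        finally show ?thesis .
      qed
      have "y \<bullet> (D *\<^sub>v y) = (\<Sum>i\<in>{0..<n}. y $ i * (D *\<^sub>v y) $ i)"
        using D unfolding scalar_prod_def by simp
      also have "\<dots> = (\<Sum>i\<in>{0..<n}. D $$ (i,i) * (y $ i)^2)"
        by (rule sum.cong[OF refl]) (simp add: Dy power2_eq_square)
      finally show ?thesis by (simp add: lessThan_atLeast0)
    qed
    also have "\<dots> \<ge> (\<Sum>i<n. M * (y $ i)^2)"
    proof (rule sum_mono)
      fix i assume i: "i \<in> {..<n}"
      show "M * (y $ i)^2 \<le> D $$ (i,i) * (y $ i)^2"
      proof (cases "i = i0")
        case True then show ?thesis using y0 by simp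
      next
        case False then show ?thesis using Mge[of i] i \<mu>i[of i] by (auto intro: mult_right_mono)
      qed
    qed
    moreover have "(\<Sum>i<n. M * (y $ i)^2) = M * (x \<bullet> x)"
    proof -
      have "y \<bullet> y = x \<bullet> (U *\<^sub>v y)" unfolding y_def using U x
        by (simp add: transpose_vec_mult_scalar[of U n n])
      also have "U *\<^sub>v y = x" unfolding y_def using U x UU'
        by (simp add: assoc_mult_mat_vec[symmetric, of _ n n _ n])
      finally have "y \<bullet> y = x \<bullet> x" .
      have "(\<Sum>i<n. M * (y $ i)^2) = M * (y \<bullet> y)"
        using y by (simp add: scalar_prod_def sum_distrib_left power2_eq_square lessThan_atLeast0)
      thus ?thesis using \<open>y \<bullet> y = x \<bullet> x\<close> by simp
    qed
    ultimately show ?thesis by linarith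
  qed
  show ?thesis using l\<nu> eigs ge u uu Au quad e1 e2 unfolding L_def M_def by auto
qed

lemma sp_sum: "x \<in> carrier_vec n \<Longrightarrow> y \<in> carrier_vec n \<Longrightarrow> x \<bullet> y = (\<Sum>k<n. x $ k * y $ k)"
  by (simp add: scalar_prod_def lessThan_atLeast0)

lemma sq_ge0: fixes x :: "real vec" shows "x \<bullet> x \<ge> 0"
  unfolding scalar_prod_def by (rule sum_nonneg) simp

lemma cs:
  fixes x y :: "real vec"
  assumes x: "x \<in> carrier_vec n" and y: "y \<in> carrier_vec n"
  shows "(x \<bullet> y)^2 \<le> (x \<bullet> x) * (y \<bullet> y)"
proof -
  have key: "0 \<le> x \<bullet> x + 2 * t * (x \<bullet> y) + t^2 * (y \<bullet> y)" for t :: real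
  proof -
    have "0 \<le> (\<Sum>k<n. (x $ k + t * y $ k)^2)" by (rule sum_nonneg) simp
    also have "\<dots> = (\<Sum>k<n. x $ k * x $ k) + 2 * t * (\<Sum>k<n. x $ k * y $ k) + t^2 * (\<Sum>k<n. y $ k * y $ k)"
      by (simp add: sum.distrib sum_distrib_left power2_eq_square algebra_simps)
    finally show ?thesis using x y by (simp add: sp_sum)
  qed
  show ?thesis
  proof (cases "y \<bullet> y = 0")
    case True
    have "0 \<le> x \<bullet> x + 2 * t * (x \<bullet> y)" for t using key[of t] True by simp
    from this[of "- (x \<bullet> x + 1) / 2 / (x \<bullet> y)"] have "x \<bullet> y = 0"
      using sq_ge0[of x] by (cases "x \<bullet> y = 0") (auto simp: field_simps)
    then show ?thesis using True by simp
  next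
    case False
    hence yy: "y \<bullet> y > 0" using sq_ge0[of y] by simp
    from key[of "- (x \<bullet> y) / (y \<bullet> y)"]
    have "0 \<le> x \<bullet> x - (x \<bullet> y)^2 / (y \<bullet> y)" using yy
      by (simp add: power2_eq_square field_simps)
    then show ?thesis using yy by (simp add: field_simps)
  qed
qed

lemma norm_tri:
  fixes x y :: "real vec"
  assumes x: "x \<in> carrier_vec n" and y: "y \<in> carrier_vec n"
  shows "sqrt ((x + y) \<bullet> (x + y)) \<le> sqrt (x \<bullet> x) + sqrt (y \<bullet> y)"
proof -
  have "x \<bullet> y \<le> sqrt (x \<bullet> x) * sqrt (y \<bullet> y)"
  proof -
    have "(x \<bullet> y)^2 \<le> (sqrt (x \<bullet> x) * sqrt (y \<bullet> y))^2"
      using cs[OF x y] sq_ge0[of x] sq_ge0[of y] by (simp add: power_mult_distrib)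
    thus ?thesis using sq_ge0[of x] sq_ge0[of y] by (meson power2_le_imp_le real_sqrt_ge_zero mult_nonneg_nonneg)
  qed
  hence "(x + y) \<bullet> (x + y) \<le> (sqrt (x \<bullet> x) + sqrt (y \<bullet> y))^2"
    using x y sq_ge0[of x] sq_ge0[of y]
    by (simp add: add_scalar_prod_distrib[of _ n] scalar_prod_add_distrib[of _ n] comm_scalar_prod[of y n x]
        power2_eq_square algebra_simps)
  thus ?thesis using sq_ge0[of x] sq_ge0[of y] by (simp add: real_sqrt_le_iff real_le_lsqrt)
qed

lemma zv_bound:
  fixes z v :: "real vec"
  assumes z: "z \<in> carrier_vec n" and v: "v \<in> carrier_vec n"
    and zz: "z \<bullet> z = 1" and vv: "v \<bullet> v = 1" and vz: "v \<bullet> z = 0"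
  shows "(\<Sum>k<n. (z $ k)^2 * (v $ k)^2) \<le> 1/2"
proof -
  define p where "p k = (z $ k + v $ k)^2 / 2" for k
  define m where "m k = (z $ k - v $ k)^2 / 2" for k
  have sz: "(\<Sum>k<n. z $ k * z $ k) = 1" using zz z by (simp add: sp_sum)
  have sv: "(\<Sum>k<n. v $ k * v $ k) = 1" using vv v by (simp add: sp_sum)
  have szv: "(\<Sum>k<n. v $ k * z $ k) = 0" using vz z v by (simp add: sp_sum)
  have sp: "(\<Sum>k<n. p k) = 1"
  proof -
    have "(\<Sum>k<n. p k) = ((\<Sum>k<n. z $ k * z $ k) + 2 * (\<Sum>k<n. v $ k * z $ k) + (\<Sum>k<n. v $ k * v $ k)) / 2"
      unfolding p_def by (simp add: sum_divide_distrib[symmetric] sum.distrib sum_distrib_left power2_eq_square algebra_simps)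
    thus ?thesis using sz sv szv by simp
  qed
  have sm: "(\<Sum>k<n. m k) = 1"
  proof -
    have "(\<Sum>k<n. m k) = ((\<Sum>k<n. z $ k * z $ k) - 2 * (\<Sum>k<n. v $ k * z $ k) + (\<Sum>k<n. v $ k * v $ k)) / 2"
      unfolding m_def by (simp add: sum_divide_distrib[symmetric] sum.distrib sum_subtractf sum_distrib_left power2_eq_square algebra_simps)
    thus ?thesis using sz sv szv by simp
  qed
  have p0: "p k \<ge> 0" for k by (simp add: p_def)
  have m0: "m k \<ge> 0" for k by (simp add: m_def)
  have p1: "p k \<le> 1" if "k < n" for k
    using member_le_sum[of k "{..<n}" p] p0 that sp by auto
  have m1: "m k \<le> 1" if "k < n" for k
    using member_le_sum[of k "{..<n}" m] m0 that sm by auto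
  have tmb: "(z $ k)^2 * (v $ k)^2 \<le> (p k + m k) / 4" if k: "k < n" for k
  proof -
    have pm: "p k - m k = 2 * (z $ k * v $ k)"
      unfolding p_def m_def by (simp add: power2_eq_square field_simps)
    have e: "(z $ k)^2 * (v $ k)^2 = (p k - m k)^2 / 4"
      unfolding pm by (simp add: power2_eq_square)
    have "(p k - m k)^2 \<le> (p k)^2 + (m k)^2" using p0[of k] m0[of k] by (simp add: power2_eq_square algebra_simps)
    also have "\<dots> \<le> p k + m k" using p0[of k] m0[of k] p1[OF k] m1[OF k]
      by (simp add: power2_eq_square mult_le_cancel_left1 add_mono mult_left_le)
    finally show ?thesis using e by simp
  qed
  have "(\<Sum>k<n. (z $ k)^2 * (v $ k)^2) \<le> (\<Sum>k<n. (p k + m k) / 4)" by (rule sum_mono) (use tmb in auto)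
  also have "\<dots> = ((\<Sum>k<n. p k) + (\<Sum>k<n. m k)) / 4" by (simp add: sum_divide_distrib[symmetric] sum.distrib)
  finally show ?thesis using sp sm by simp
qed

lemma r_bound:
  fixes z :: "real vec"
  assumes z: "z \<in> carrier_vec n" and zz: "z \<bullet> z = 1"
  defines "q \<equiv> (\<Sum>k<n. (z $ k)^4)"
  shows "q \<le> 1" "q \<ge> 0"
    "vec n (\<lambda>k. (z $ k)^3 - q * z $ k) \<bullet> vec n (\<lambda>k. (z $ k)^3 - q * z $ k) \<le> 1/4"
proof -
  have sz: "(\<Sum>k<n. (z $ k)^2) = 1" using zz z by (simp add: sp_sum power2_eq_square)
  have zk1: "(z $ k)^2 \<le> 1" if "k < n" for k
    using member_le_sum[of k "{..<n}" "\<lambda>k. (z $ k)^2"] that sz by auto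
  have z4: "(z $ k)^4 \<le> (z $ k)^2" if "k < n" for k
  proof -
    have "(z $ k)^4 = (z $ k)^2 * (z $ k)^2" by (simp add: eval_nat_numeral)
    also have "\<dots> \<le> 1 * (z $ k)^2" using zk1[OF that] by (intro mult_right_mono) auto
    finally show ?thesis by simp
  qed
  have z6: "(z $ k)^6 \<le> (z $ k)^4" if "k < n" for k
  proof -
    have "(z $ k)^6 = (z $ k)^2 * (z $ k)^4" by (simp add: eval_nat_numeral)
    also have "\<dots> \<le> 1 * (z $ k)^4" using zk1[OF that] by (intro mult_right_mono) auto
    finally show ?thesis by simp
  qed
  show q1: "q \<le> 1" unfolding q_def using sum_mono[of "{..<n}" "\<lambda>k. (z $ k)^4" "\<lambda>k. (z $ k)^2"] z4 sz by auto
  show q0: "q \<ge> 0" unfolding q_def by (rule sum_nonneg) auto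
  have "vec n (\<lambda>k. (z $ k)^3 - q * z $ k) \<bullet> vec n (\<lambda>k. (z $ k)^3 - q * z $ k)
      = (\<Sum>k<n. ((z $ k)^3 - q * z $ k)^2)" by (simp add: sp_sum power2_eq_square)
  also have "\<dots> = (\<Sum>k<n. (z $ k)^6 - 2 * q * (z $ k)^4 + q^2 * (z $ k)^2)"
    by (rule sum.cong) (auto simp: power2_eq_square eval_nat_numeral algebra_simps)
  also have "\<dots> = (\<Sum>k<n. (z $ k)^6) - 2 * q * (\<Sum>k<n. (z $ k)^4) + q^2 * (\<Sum>k<n. (z $ k)^2)"
    by (simp add: sum.distrib sum_subtractf sum_distrib_left)
  also have "\<dots> = (\<Sum>k<n. (z $ k)^6) - q^2" using sz unfolding q_def by (simp add: power2_eq_square)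
  also have "\<dots> \<le> q - q^2" unfolding q_def using sum_mono[of "{..<n}" "\<lambda>k. (z $ k)^6" "\<lambda>k. (z $ k)^4"] z6 by auto
  also have "\<dots> \<le> 1/4"
  proof -
    have "0 \<le> (q - 1/2)^2" by simp
    thus ?thesis by (simp add: power2_eq_square algebra_simps)
  qed
  finally show "vec n (\<lambda>k. (z $ k)^3 - q * z $ k) \<bullet> vec n (\<lambda>k. (z $ k)^3 - q * z $ k) \<le> 1/4" .
qed

lemma diag_mult_vec:
  assumes v: "v \<in> carrier_vec n"
  shows "mat_diag n f *\<^sub>v v = vec n (\<lambda>k. f k * v $ k)"
proof (rule eq_vecI)
  fix i assume "i < dim_vec (vec n (\<lambda>k. f k * v $ k))"
  hence i: "i < n" by simp
  have "(mat_diag n f *\<^sub>v v) $ i = (\<Sum>j\<in>{0..<n}. (if i = j then f j else 0) * v $ j)"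
    using i v by (simp add: mat_diag_def scalar_prod_def)
  also have "\<dots> = (\<Sum>j\<in>{0..<n}. if j = i then f i * v $ i else 0)" by (rule sum.cong) auto
  also have "\<dots> = f i * v $ i" using i by simp
  finally show "(mat_diag n f *\<^sub>v v) $ i = vec n (\<lambda>k. f k * v $ k) $ i" using i by simp
qed (simp add: mat_diag_def)

lemma mat_diag_carrier[simp]: "mat_diag n f \<in> carrier_mat n n" by (simp add: mat_diag_def)

lemma tl_eq: assumes z: "z \<in> carrier_vec n"
  shows "two_lambda A \<beta> z = z \<bullet> (A *\<^sub>v z) + 2 * \<beta> * (\<Sum>k<n. (z $ k)^4)"
  using z by (simp add: two_lambda_def)

lemma hess_eq:
  assumes A: "A \<in> carrier_mat n n" and z: "z \<in> carrier_vec n" and v: "v \<in> carrier_vec n"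
  shows "hess_f A \<beta> z v = v \<bullet> (A *\<^sub>v v) + 6 * \<beta> * (\<Sum>k<n. (z $ k)^2 * (v $ k)^2) - two_lambda A \<beta> z * (v \<bullet> v)"
proof -
  let ?D = "mat_diag n (\<lambda>k. (z $ k)^2)"
  let ?t = "two_lambda A \<beta> z"
  have dz: "dim_vec z = n" using z by simp
  have "(A + 6 * \<beta> \<cdot>\<^sub>m ?D - ?t \<cdot>\<^sub>m 1\<^sub>m n) *\<^sub>v v = A *\<^sub>v v + (6 * \<beta>) \<cdot>\<^sub>v (?D *\<^sub>v v) - ?t \<cdot>\<^sub>v v"
    using A v by (simp add: minus_mult_distrib_mat_vec[of _ n n] add_mult_distrib_mat_vec[of _ n n]
        smult_mat_vec[of _ n n])
  also have "?D *\<^sub>v v = vec n (\<lambda>k. (z $ k)^2 * v $ k)" by (rule diag_mult_vec[OF v])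
  finally have e: "(A + 6 * \<beta> \<cdot>\<^sub>m ?D - ?t \<cdot>\<^sub>m 1\<^sub>m n) *\<^sub>v v
     = A *\<^sub>v v + (6 * \<beta>) \<cdot>\<^sub>v vec n (\<lambda>k. (z $ k)^2 * v $ k) - ?t \<cdot>\<^sub>v v" .
  have s: "v \<bullet> vec n (\<lambda>k. (z $ k)^2 * v $ k) = (\<Sum>k<n. (z $ k)^2 * (v $ k)^2)"
    using v by (simp add: sp_sum power2_eq_square ac_simps)
  show ?thesis unfolding hess_f_def dz e using A v s
    by (simp add: scalar_prod_minus_distrib[of _ n] scalar_prod_add_distrib[of _ n])
qed

lemma grad_eq:
  assumes A: "A \<in> carrier_mat n n" and z: "z \<in> carrier_vec n"
  shows "grad_f A \<beta> z = A *\<^sub>v z + (2 * \<beta>) \<cdot>\<^sub>v vec n (\<lambda>k. (z $ k)^3) - two_lambda A \<beta> z \<cdot>\<^sub>v z"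
proof -
  let ?D = "mat_diag n (\<lambda>k. (z $ k)^2)"
  have dz: "dim_vec z = n" using z by simp
  have "(A + 2 * \<beta> \<cdot>\<^sub>m ?D) *\<^sub>v z = A *\<^sub>v z + (2 * \<beta>) \<cdot>\<^sub>v (?D *\<^sub>v z)"
    using A z by (simp add: add_mult_distrib_mat_vec[of _ n n] smult_mat_vec[of _ n n])
  also have "?D *\<^sub>v z = vec n (\<lambda>k. (z $ k)^3)" unfolding diag_mult_vec[OF z]
    by (simp add: power2_eq_square eval_nat_numeral mult.assoc)
  finally show ?thesis unfolding grad_f_def dz by simp
qed

lemma symA: assumes A: "A \<in> carrier_mat n n" and sym: "A\<^sup>T = A"
  and x: "x \<in> carrier_vec n" and y: "y \<in> carrier_vec n"
  shows "x \<bullet> (A *\<^sub>v y) = y \<bullet> (A *\<^sub>v (x :: real vec))"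
proof -
  have "x \<bullet> (A *\<^sub>v y) = (A\<^sup>T *\<^sub>v x) \<bullet> y" using transpose_vec_mult_scalar[OF A y x] by simp
  also have "\<dots> = y \<bullet> (A *\<^sub>v x)" using sym A x y by (simp add: comm_scalar_prod[of _ n])
  finally show ?thesis .
qed

lemma core_setup:
  fixes A :: "real mat" and u z :: "real vec"
  assumes A: "A \<in> carrier_mat n n" and sym: "A\<^sup>T = A"
    and u: "u \<in> carrier_vec n" and uu: "u \<bullet> u = 1" and Au: "A *\<^sub>v u = L \<cdot>\<^sub>v u"
    and quad: "\<And>x. x \<in> carrier_vec n \<Longrightarrow> x \<bullet> u = 0 \<Longrightarrow> x \<bullet> (A *\<^sub>v x) \<ge> M * (x \<bullet> x)"
    and z: "z \<in> carrier_vec n" and zz: "z \<bullet> z = 1"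
  defines "c \<equiv> u \<bullet> z"
  defines "a \<equiv> z \<bullet> (A *\<^sub>v z) - L"
  shows "a \<ge> (M - L) * (1 - c^2)"
    and "\<And>x. x \<in> carrier_vec n \<Longrightarrow> u \<bullet> (A *\<^sub>v x) = L * (u \<bullet> x)"
    and "c^2 \<le> 1"
proof -
  define w where "w = z - c \<cdot>\<^sub>v u"
  have w: "w \<in> carrier_vec n" using z u by (simp add: w_def)
  have zw: "z = w + c \<cdot>\<^sub>v u" unfolding w_def using z u by (intro eq_vecI) auto
  have uz: "z \<bullet> u = c" using z u by (simp add: c_def comm_scalar_prod[of _ n])
  have wu: "w \<bullet> u = 0" unfolding w_def using z u uu uz by (simp add: minus_scalar_prod_distrib[of _ n])
  have uw: "u \<bullet> w = 0" using wu u w by (simp add: comm_scalar_prod[of _ n])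
  have ww: "w \<bullet> w = 1 - c^2"
  proof -
    have "z \<bullet> z = w \<bullet> w + 2 * c * (u \<bullet> w) + c^2 * (u \<bullet> u)" unfolding zw using w u
      by (simp add: add_scalar_prod_distrib[of _ n] scalar_prod_add_distrib[of _ n]
          comm_scalar_prod[of w n u] power2_eq_square algebra_simps)
    thus ?thesis using zz uw uu by simp
  qed
  show uA: "u \<bullet> (A *\<^sub>v x) = L * (u \<bullet> x)" if x: "x \<in> carrier_vec n" for x
    using symA[OF A sym u x] Au x u by (simp add: comm_scalar_prod[of _ n])
  have "z \<bullet> (A *\<^sub>v z) = w \<bullet> (A *\<^sub>v w) + c^2 * L"
  proof -
    have "A *\<^sub>v z = A *\<^sub>v w + (c * L) \<cdot>\<^sub>v u" unfolding zw using A w u Au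
      by (simp add: mult_add_distrib_mat_vec[of _ n n] mult_mat_vec[of _ n n] smult_smult_assoc)
    hence "z \<bullet> (A *\<^sub>v z) = (w + c \<cdot>\<^sub>v u) \<bullet> (A *\<^sub>v w + (c * L) \<cdot>\<^sub>v u)" using zw by simp
    also have "\<dots> = w \<bullet> (A *\<^sub>v w) + c * L * (w \<bullet> u) + c * (u \<bullet> (A *\<^sub>v w)) + c * c * L * (u \<bullet> u)"
      using w u A by (simp add: add_scalar_prod_distrib[of _ n] scalar_prod_add_distrib[of _ n] algebra_simps)
    also have "\<dots> = w \<bullet> (A *\<^sub>v w) + c^2 * L" using wu uu uA[OF w] uw by (simp add: power2_eq_square)
    finally show ?thesis .
  qed
  moreover have "w \<bullet> (A *\<^sub>v w) \<ge> M * (1 - c^2)" using quad[OF w wu] ww by simp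
  ultimately show "a \<ge> (M - L) * (1 - c^2)" unfolding a_def by (simp add: algebra_simps)
  show "c^2 \<le> 1" using ww sq_ge0[of w] by simp
qed

lemma core:
  fixes A :: "real mat" and u z :: "real vec"
  assumes A: "A \<in> carrier_mat n n" and sym: "A\<^sup>T = A"
    and u: "u \<in> carrier_vec n" and uu: "u \<bullet> u = 1" and Au: "A *\<^sub>v u = L \<cdot>\<^sub>v u"
    and quad: "\<And>x. x \<in> carrier_vec n \<Longrightarrow> x \<bullet> u = 0 \<Longrightarrow> x \<bullet> (A *\<^sub>v x) \<ge> M * (x \<bullet> x)"
    and g0: "\<gamma> > 0" and b0: "\<beta> > 0" and hb: "\<beta> * (16/3 + 3 * \<gamma>) \<le> M - L"
    and z: "z \<in> carrier_vec n" and zz: "z \<bullet> z = 1" and c0: "u \<bullet> z \<ge> 0"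
  shows "(\<forall>v\<in>tangent z \<inter> unit_sphere n. hess_f A \<beta> z v \<ge> \<gamma> * \<beta>)
      \<or> sqrt (grad_f A \<beta> z \<bullet> grad_f A \<beta> z) \<ge> \<gamma> * \<beta>
      \<or> (\<exists>v\<in>tangent z \<inter> unit_sphere n. hess_f A \<beta> z v \<le> - (\<gamma> * \<beta>))"
proof -
  define \<delta> where "\<delta> = M - L"
  have "\<beta> * (16/3 + 3 * \<gamma>) > 0" using b0 g0 by simp
  hence dpos: "\<delta> > 0" using hb unfolding \<delta>_def by linarith
  define c where "c = u \<bullet> z"
  define a where "a = z \<bullet> (A *\<^sub>v z) - L"
  define q where "q = (\<Sum>k<n. (z $ k)^4)"
  have dz: "dim_vec z = n" using z by simp
  have tl: "two_lambda A \<beta> z = a + L + 2 * \<beta> * q" unfolding tl_eq[OF z] a_def q_def by simp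
  have age: "a \<ge> \<delta> * (1 - c^2)" and uA: "\<And>x. x \<in> carrier_vec n \<Longrightarrow> u \<bullet> (A *\<^sub>v x) = L * (u \<bullet> x)"
    and c1: "c^2 \<le> 1"
    using core_setup[OF A sym u uu Au quad z zz] unfolding \<delta>_def c_def a_def by auto
  have uz: "z \<bullet> u = c" using z u by (simp add: c_def comm_scalar_prod[of _ n])
  have q1: "q \<le> 1" and q0: "q \<ge> 0" and rr: "vec n (\<lambda>k. (z $ k)^3 - q * z $ k) \<bullet> vec n (\<lambda>k. (z $ k)^3 - q * z $ k) \<le> 1/4"
    using r_bound[OF z zz] unfolding q_def by auto
  define r where "r = vec n (\<lambda>k. (z $ k)^3 - q * z $ k)"
  have r: "r \<in> carrier_vec n" by (simp add: r_def)
  have rr: "r \<bullet> r \<le> 1/4" using rr unfolding r_def .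
  have nr: "sqrt (r \<bullet> r) \<le> 1/2"
  proof -
    have "sqrt (r \<bullet> r) \<le> sqrt (1/4)" using rr by (rule real_sqrt_le_mono)
    also have "sqrt (1/4) = (1/2 :: real)" by (rule real_sqrt_unique) (auto simp: power2_eq_square)
    finally show ?thesis .
  qed
  define g where "g = grad_f A \<beta> z"
  define h where "h = A *\<^sub>v z - (z \<bullet> (A *\<^sub>v z)) \<cdot>\<^sub>v z"
  have h: "h \<in> carrier_vec n" using A z by (simp add: h_def)
  have g: "g \<in> carrier_vec n" using A z by (simp add: g_def grad_eq[OF A z])
  have ghr: "g = h + (2 * \<beta>) \<cdot>\<^sub>v r"
    unfolding g_def grad_eq[OF A z] h_def r_def tl a_def using A z
    by (intro eq_vecI) (auto simp: algebra_simps)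
  have hgr: "h = g + (- 2 * \<beta>) \<cdot>\<^sub>v r"
    unfolding ghr using h r by (intro eq_vecI) auto
  have Hform: "hess_f A \<beta> z v = v \<bullet> (A *\<^sub>v v) + 6 * \<beta> * (\<Sum>k<n. (z $ k)^2 * (v $ k)^2) - (a + L + 2 * \<beta> * q)"
    if v: "v \<in> carrier_vec n" "v \<bullet> v = 1" for v
    using hess_eq[OF A z v(1)] v(2) tl by simp
  have S0: "(\<Sum>k<n. (z $ k)^2 * (v $ k)^2) \<ge> 0" for v :: "real vec" by (rule sum_nonneg) auto
  have hbl: "16/3 * \<beta> + 3 * (\<gamma> * \<beta>) \<le> \<delta>" using hb unfolding \<delta>_def by (simp add: algebra_simps)
  have gb: "\<gamma> * \<beta> > 0" using b0 g0 by simp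
  consider (N) "c^2 \<le> 1/5" | (G) "1/5 < c^2" "c^2 < 4/5" | (P) "4/5 \<le> c^2" by linarith
  then show ?thesis
  proof cases
    case N
    define s2 where "s2 = 1 - c^2"
    have s2: "s2 \<ge> 4/5" using N by (simp add: s2_def)
    define k where "k = 1 / sqrt s2"
    define p where "p = u - c \<cdot>\<^sub>v z"
    have p: "p \<in> carrier_vec n" using u z by (simp add: p_def)
    define v where "v = k \<cdot>\<^sub>v p"
    have v: "v \<in> carrier_vec n" using p by (simp add: v_def)
    have k2: "k^2 * s2 = 1" using s2 by (simp add: k_def power_divide)
    have pz: "p \<bullet> z = 0" unfolding p_def using u z zz by (simp add: minus_scalar_prod_distrib[of _ n] c_def)
    have pp: "p \<bullet> p = s2"
      unfolding p_def using u z zz uu uz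
      by (simp add: minus_scalar_prod_distrib[of _ n] scalar_prod_minus_distrib[of _ n] c_def s2_def
          comm_scalar_prod[of z n u] power2_eq_square)
    have vz: "v \<bullet> z = 0" unfolding v_def using p z pz by simp
    have vv: "v \<bullet> v = 1" unfolding v_def using p pp k2 by (simp add: power2_eq_square ac_simps)
    have pAp: "p \<bullet> (A *\<^sub>v p) = L * s2 + c^2 * a"
    proof -
      have Ap: "A *\<^sub>v p = L \<cdot>\<^sub>v u - c \<cdot>\<^sub>v (A *\<^sub>v z)" unfolding p_def using A u z Au
        by (simp add: mult_minus_distrib_mat_vec[of _ n n] mult_mat_vec[of _ n n])
      have "p \<bullet> (A *\<^sub>v p) = L * (u \<bullet> u) - c * (u \<bullet> (A *\<^sub>v z)) - c * L * (z \<bullet> u) + c^2 * (z \<bullet> (A *\<^sub>v z))"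
        unfolding Ap unfolding p_def using u z A
        by (simp add: minus_scalar_prod_distrib[of _ n] scalar_prod_minus_distrib[of _ n] power2_eq_square algebra_simps)
      also have "\<dots> = L * s2 + c^2 * a" using uu uA[OF z] uz unfolding s2_def a_def c_def
        by (simp add: power2_eq_square algebra_simps)
      finally show ?thesis .
    qed
    have vAv: "v \<bullet> (A *\<^sub>v v) = L + c^2 * a / s2"
    proof -
      have "v \<bullet> (A *\<^sub>v v) = k^2 * (p \<bullet> (A *\<^sub>v p))" unfolding v_def using A p
        by (simp add: mult_mat_vec[of _ n n] power2_eq_square)
      also have "\<dots> = L + c^2 * a / s2" unfolding pAp using k2 s2
        by (simp add: field_simps)
      finally show ?thesis .
    qed
    have S: "(\<Sum>k<n. (z $ k)^2 * (v $ k)^2) \<le> 1/2" by (rule zv_bound[OF z v zz vv vz])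
    have H: "hess_f A \<beta> z v \<le> c^2 * a / s2 - a + 3 * \<beta>"
    proof -
      have "6 * \<beta> * (\<Sum>k<n. (z $ k)^2 * (v $ k)^2) \<le> 6 * \<beta> * (1/2)" using S b0 by (intro mult_left_mono) auto
      moreover have "\<beta> * q \<ge> 0" using b0 q0 by simp
      ultimately show ?thesis unfolding Hform[OF v vv] vAv by linarith
    qed
    have "c^2 * a / s2 - a = a * (2 * c^2 - 1) / s2" using s2 unfolding s2_def by (simp add: field_simps)
    also have "\<dots> \<le> \<delta> * s2 * (2 * c^2 - 1) / s2"
      using age N s2 unfolding s2_def by (intro divide_right_mono mult_right_mono_neg) auto
    also have "\<dots> = \<delta> * (2 * c^2 - 1)" using s2 by simp
    also have "\<dots> \<le> \<delta> * (- 3/5)" using N dpos by (intro mult_left_mono) auto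
    finally have "hess_f A \<beta> z v \<le> - (\<gamma> * \<beta>)" using H hbl gb b0 by linarith
    moreover have "v \<in> tangent z \<inter> unit_sphere n" using v vz vv z unfolding tangent_def unit_sphere_def by auto
    ultimately show ?thesis by blast
  next
    case G
    define bz where "bz = A *\<^sub>v z - L \<cdot>\<^sub>v z"
    have bz: "bz \<in> carrier_vec n" using A z by (simp add: bz_def)
    have hb': "h = bz - a \<cdot>\<^sub>v z" unfolding h_def bz_def a_def using A z
      by (intro eq_vecI) (auto simp: algebra_simps)
    have zbz: "z \<bullet> bz = a" unfolding bz_def a_def using A z zz
      by (simp add: scalar_prod_minus_distrib[of _ n])
    have bzz: "bz \<bullet> z = a" using zbz bz z by (simp add: comm_scalar_prod[of _ n])
    have hh: "h \<bullet> h = bz \<bullet> bz - a^2" unfolding hb' using bz z zz zbz bzz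
      by (simp add: minus_scalar_prod_distrib[of _ n] scalar_prod_minus_distrib[of _ n] power2_eq_square)
    define w where "w = z - c \<cdot>\<^sub>v u"
    have w: "w \<in> carrier_vec n" using z u by (simp add: w_def)
    have ubz: "u \<bullet> bz = 0" unfolding bz_def using A z u uA[OF z]
      by (simp add: scalar_prod_minus_distrib[of _ n] c_def)
    have wbz: "w \<bullet> bz = a" unfolding w_def using z u bz zbz ubz
      by (simp add: minus_scalar_prod_distrib[of _ n])
    have ww: "w \<bullet> w = 1 - c^2" unfolding w_def using z u zz uu uz
      by (simp add: minus_scalar_prod_distrib[of _ n] scalar_prod_minus_distrib[of _ n] c_def
          comm_scalar_prod[of z n u] power2_eq_square)
    have csi: "a^2 \<le> (1 - c^2) * (bz \<bullet> bz)" using cs[OF w bz] wbz ww by simp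
    have c1': "1 - c^2 > 0" using G by simp
    have e1: "(1 - c^2) * (h \<bullet> h) \<ge> c^2 * a^2" unfolding hh using csi by (simp add: algebra_simps)
    have e2: "a^2 \<ge> (\<delta> * (1 - c^2))^2" using age dpos G by (intro power_mono) auto
    have e3: "c^2 * a^2 \<ge> c^2 * (\<delta> * (1 - c^2))^2" using e2 by (intro mult_left_mono) auto
    have e4: "c^2 * (\<delta> * (1 - c^2))^2 = (1 - c^2) * (c^2 * \<delta>^2 * (1 - c^2))"
      by (simp add: power2_eq_square algebra_simps)
    have "(1 - c^2) * (h \<bullet> h) \<ge> (1 - c^2) * (c^2 * \<delta>^2 * (1 - c^2))" using e1 e3 e4 by linarith
    hence e5: "h \<bullet> h \<ge> c^2 * \<delta>^2 * (1 - c^2)" using c1' by simp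
    have e6: "c^2 * (1 - c^2) \<ge> 4/25"
    proof -
      have "0 \<le> (c^2 - 1/5) * (4/5 - c^2)" using G by simp
      thus ?thesis by (simp add: algebra_simps)
    qed
    have "\<delta>^2 * (c^2 * (1 - c^2)) \<ge> \<delta>^2 * (4/25)" using e6 by (intro mult_left_mono) auto
    hence "h \<bullet> h \<ge> (2/5 * \<delta>)^2" using e5 by (simp add: power2_eq_square algebra_simps)
    hence nh: "sqrt (h \<bullet> h) \<ge> 2/5 * \<delta>" by (rule real_le_rsqrt)
    have "sqrt (h \<bullet> h) \<le> sqrt (g \<bullet> g) + sqrt (((- 2 * \<beta>) \<cdot>\<^sub>v r) \<bullet> ((- 2 * \<beta>) \<cdot>\<^sub>v r))"
      unfolding hgr using norm_tri[OF g, of "(- 2 * \<beta>) \<cdot>\<^sub>v r"] r by simp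
    also have "sqrt (((- 2 * \<beta>) \<cdot>\<^sub>v r) \<bullet> ((- 2 * \<beta>) \<cdot>\<^sub>v r)) = 2 * \<beta> * sqrt (r \<bullet> r)"
    proof -
      have "((- 2 * \<beta>) \<cdot>\<^sub>v r) \<bullet> ((- 2 * \<beta>) \<cdot>\<^sub>v r) = (2 * \<beta>)^2 * (r \<bullet> r)" using r
        by (simp add: power2_eq_square)
      thus ?thesis using b0 by (simp add: real_sqrt_mult)
    qed
    finally have e7: "sqrt (g \<bullet> g) \<ge> 2/5 * \<delta> - 2 * \<beta> * sqrt (r \<bullet> r)" using nh by linarith
    have "2 * \<beta> * sqrt (r \<bullet> r) \<le> 2 * \<beta> * (1/2)" using nr b0 by (intro mult_left_mono) auto
    moreover have "\<gamma> * \<beta> > 0" using b0 g0 by simp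
    ultimately have "sqrt (g \<bullet> g) \<ge> \<gamma> * \<beta>" using e7 hbl b0 by linarith
    thus ?thesis unfolding g_def by blast
  next
    case P
    show ?thesis
    proof (cases "sqrt (g \<bullet> g) \<ge> \<gamma> * \<beta>")
      case True thus ?thesis unfolding g_def by blast
    next
      case False
      hence gs: "sqrt (g \<bullet> g) < \<gamma> * \<beta>" by simp
      have cpos: "c \<ge> 0" using c0 unfolding c_def .
      have c56: "c \<ge> 5/6"
      proof (rule ccontr)
        assume "\<not> c \<ge> 5/6"
        hence "c^2 < (5/6)^2" using cpos by (intro power_strict_mono) auto
        thus False using P by (simp add: power2_eq_square)
      qed
      have cle1: "c \<le> 1"
      proof (rule ccontr)
        assume "\<not> c \<le> 1"
        hence "1^2 < c^2" by (intro power_strict_mono) auto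
        thus False using c1 by simp
      qed
      have uh: "u \<bullet> h = - (a * c)" unfolding h_def using A u z uA[OF z]
        by (simp add: scalar_prod_minus_distrib[of _ n] c_def a_def algebra_simps)
      have ug: "u \<bullet> g = u \<bullet> h + 2 * \<beta> * (u \<bullet> r)" unfolding ghr using u h r
        by (simp add: scalar_prod_add_distrib[of _ n])
      have ur: "\<bar>u \<bullet> r\<bar> \<le> sqrt (r \<bullet> r)"
        using cs[OF u r] uu by (intro real_le_rsqrt) (simp add: power2_abs)
      have ugn: "\<bar>u \<bullet> g\<bar> \<le> sqrt (g \<bullet> g)"
        using cs[OF u g] uu by (intro real_le_rsqrt) (simp add: power2_abs)
      have "2 * \<beta> * \<bar>u \<bullet> r\<bar> \<le> 2 * \<beta> * (1/2)" using ur nr b0 by (intro mult_left_mono) auto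
      moreover have "2 * \<beta> * (u \<bullet> r) \<le> 2 * \<beta> * \<bar>u \<bullet> r\<bar>" using b0 by (intro mult_left_mono) auto
      moreover have "- (u \<bullet> g) \<le> \<bar>u \<bullet> g\<bar>" by simp
      ultimately have ac: "a * c \<le> \<beta> + \<gamma> * \<beta>" using ug uh ugn gs b0 by linarith
      have "\<gamma> * \<beta> \<le> hess_f A \<beta> z v" if vt: "v \<in> tangent z \<inter> unit_sphere n" for v
      proof -
        have v: "v \<in> carrier_vec n" and vz: "v \<bullet> z = 0" and vv: "v \<bullet> v = 1"
          using vt dz unfolding tangent_def unit_sphere_def by auto
        define \<alpha> where "\<alpha> = v \<bullet> u"
        define y where "y = v - \<alpha> \<cdot>\<^sub>v u"
        have y: "y \<in> carrier_vec n" using v u by (simp add: y_def)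
        have vyu: "v = y + \<alpha> \<cdot>\<^sub>v u" unfolding y_def using v u by (intro eq_vecI) auto
        have uv: "u \<bullet> v = \<alpha>" using u v by (simp add: \<alpha>_def comm_scalar_prod[of _ n])
        have yu: "y \<bullet> u = 0" unfolding y_def using v u uu by (simp add: minus_scalar_prod_distrib[of _ n] \<alpha>_def)
        have uy: "u \<bullet> y = 0" using yu u y by (simp add: comm_scalar_prod[of _ n])
        have yy: "y \<bullet> y = 1 - \<alpha>^2" unfolding y_def using v u vv uu uv
          by (simp add: minus_scalar_prod_distrib[of _ n] scalar_prod_minus_distrib[of _ n] \<alpha>_def power2_eq_square)
        have yAy: "y \<bullet> (A *\<^sub>v y) \<ge> M * (1 - \<alpha>^2)" using quad[OF y yu] yy by simp
        have vAv: "v \<bullet> (A *\<^sub>v v) = y \<bullet> (A *\<^sub>v y) + \<alpha>^2 * L"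
        proof -
          have Av: "A *\<^sub>v v = A *\<^sub>v y + (\<alpha> * L) \<cdot>\<^sub>v u" unfolding vyu using A y u Au
            by (simp add: mult_add_distrib_mat_vec[of _ n n] mult_mat_vec[of _ n n] smult_smult_assoc)
          have "v \<bullet> (A *\<^sub>v v) = (y + \<alpha> \<cdot>\<^sub>v u) \<bullet> (A *\<^sub>v y + (\<alpha> * L) \<cdot>\<^sub>v u)"
            using Av vyu by simp
          also have "\<dots> = y \<bullet> (A *\<^sub>v y) + \<alpha> * L * (y \<bullet> u) + \<alpha> * (u \<bullet> (A *\<^sub>v y)) + \<alpha> * \<alpha> * L * (u \<bullet> u)"
            using y u A by (simp add: add_scalar_prod_distrib[of _ n] scalar_prod_add_distrib[of _ n] algebra_simps)
          also have "\<dots> = y \<bullet> (A *\<^sub>v y) + \<alpha>^2 * L" using yu uu uA[OF y] uy by (simp add: power2_eq_square)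
          finally show ?thesis .
        qed
        define w where "w = z - c \<cdot>\<^sub>v u"
        have w: "w \<in> carrier_vec n" using z u by (simp add: w_def)
        have ww: "w \<bullet> w = 1 - c^2" unfolding w_def using z u zz uu uz
          by (simp add: minus_scalar_prod_distrib[of _ n] scalar_prod_minus_distrib[of _ n] c_def
              comm_scalar_prod[of z n u] power2_eq_square)
        have yw: "y \<bullet> w = - (\<alpha> * c)" unfolding y_def w_def using v u z vz uu uz uv
          by (simp add: minus_scalar_prod_distrib[of _ n] scalar_prod_minus_distrib[of _ n] \<alpha>_def c_def
              comm_scalar_prod[of z n u] algebra_simps)
        have "(\<alpha> * c)^2 \<le> (1 - \<alpha>^2) * (1 - c^2)" using cs[OF y w] yw yy ww by simp
        hence al: "1 - \<alpha>^2 \<ge> c^2" by (simp add: power2_eq_square algebra_simps)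
        have S: "(\<Sum>k<n. (z $ k)^2 * (v $ k)^2) \<ge> 0" by (rule S0)
        have bq: "2 * \<beta> * q \<le> 2 * \<beta>" using q1 b0 by simp
        have bS: "6 * \<beta> * (\<Sum>k<n. (z $ k)^2 * (v $ k)^2) \<ge> 0" using S b0 by simp
        have e1: "(M - L) * (1 - \<alpha>^2) = M - M * \<alpha>^2 - L + \<alpha>^2 * L" by (simp add: algebra_simps)
        have e2: "M * (1 - \<alpha>^2) = M - M * \<alpha>^2" by (simp add: algebra_simps)
        have H1: "hess_f A \<beta> z v \<ge> \<delta> * (1 - \<alpha>^2) - a - 2 * \<beta>"
          unfolding Hform[OF v vv] vAv \<delta>_def using yAy bq bS e1 e2 by linarith
        have "\<delta> * (1 - \<alpha>^2) \<ge> \<delta> * c^2" using al dpos by (intro mult_left_mono) auto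
        hence H2: "hess_f A \<beta> z v - \<gamma> * \<beta> \<ge> \<delta> * c^2 - a - (2 + \<gamma>) * \<beta>" using H1
          by (simp add: algebra_simps)
        have "c * (hess_f A \<beta> z v - \<gamma> * \<beta>) \<ge> c * (\<delta> * c^2 - a - (2 + \<gamma>) * \<beta>)"
          using H2 cpos by (intro mult_left_mono) auto
        also have "c * (\<delta> * c^2 - a - (2 + \<gamma>) * \<beta>) = \<delta> * (c^2 * c) - a * c - 2 * (\<beta> * c) - (\<gamma> * \<beta>) * c"
          by (simp add: power2_eq_square algebra_simps)
        finally have H3: "c * (hess_f A \<beta> z v - \<gamma> * \<beta>) \<ge> \<delta> * (c^2 * c) - a * c - 2 * (\<beta> * c) - (\<gamma> * \<beta>) * c" .
        have "c^2 * c \<ge> 4/5 * (5/6)" using P c56 by (intro mult_mono) auto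
        hence d1: "\<delta> * (c^2 * c) \<ge> \<delta> * (2/3)" using dpos by (intro mult_left_mono) auto
        have d2: "\<beta> * c \<le> \<beta>" using cle1 b0 by (simp add: mult_left_le)
        have d3: "(\<gamma> * \<beta>) * c \<le> \<gamma> * \<beta>" using cle1 gb by (simp add: mult_left_le)
        have "c * (hess_f A \<beta> z v - \<gamma> * \<beta>) \<ge> 0" using H3 d1 d2 d3 ac hbl gb b0 by linarith
        moreover have "c > 0" using c56 by simp
        ultimately show ?thesis by (simp add: zero_le_mult_iff)
      qed
      thus ?thesis by blast
    qed
  qed
qed

theorem theorem14:
  fixes n :: nat and A :: "real mat" and \<beta> \<gamma> \<rho> \<delta> :: real
  assumes "n \<ge> 2"
    and "A \<in> carrier_mat n n"
    and "transpose_mat A = A"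
    and "\<rho> = eigs A ! 0 - eigs A ! (n - 1)"
    and "\<delta> = eigs A ! (n - 2) - eigs A ! (n - 1)"
    and "\<delta> > 0"
    and "\<gamma> > 0"
    and "\<beta> > 0"
    and "\<beta> \<le> \<delta> / (2 * (7/3 + \<gamma>) + (2/3 + \<gamma>) * (\<rho> / \<delta>))"
  shows "strict_saddle n A \<beta> (\<gamma> * \<beta>) (\<gamma> * \<beta>) (\<gamma> * \<beta>)"
proof -
  note n2 = assms(1) and A = assms(2) and sym = assms(3) and rho = assms(4) and del = assms(5)
    and dpos = assms(6) and g0 = assms(7) and b0 = assms(8) and bb = assms(9)
  define L where "L = eigs A ! (n - 1)"
  define M where "M = eigs A ! (n - 2)"
  obtain u where u: "u \<in> carrier_vec n" and uu: "u \<bullet> u = 1" and Au: "A *\<^sub>v u = L \<cdot>\<^sub>v u"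
    and quad: "\<And>x. x \<in> carrier_vec n \<Longrightarrow> x \<bullet> u = 0 \<Longrightarrow> x \<bullet> (A *\<^sub>v x) \<ge> M * (x \<bullet> x)"
    and ge: "eigs A ! 0 \<ge> M"
    using spectral_facts[OF A sym n2] unfolding L_def M_def by blast
  have rd: "\<rho> \<ge> \<delta>" using rho del ge unfolding M_def by simp
  have r1: "\<rho> / \<delta> \<ge> 1" using rd dpos by simp
  define D where "D = 2 * (7/3 + \<gamma>) + (2/3 + \<gamma>) * (\<rho> / \<delta>)"
  have "(2/3 + \<gamma>) * (\<rho> / \<delta>) \<ge> (2/3 + \<gamma>) * 1" using r1 g0 by (intro mult_left_mono) auto
  hence DD: "D \<ge> 16/3 + 3 * \<gamma>" unfolding D_def by simp
  hence Dpos: "D > 0" using g0 by simp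
  have "\<beta> * D \<le> \<delta>" using bb Dpos unfolding D_def[symmetric] by (simp add: field_simps)
  moreover have "\<beta> * (16/3 + 3 * \<gamma>) \<le> \<beta> * D" using DD b0 by (intro mult_left_mono) auto
  ultimately have hb: "\<beta> * (16/3 + 3 * \<gamma>) \<le> M - L" using del unfolding L_def M_def by simp
  show ?thesis unfolding strict_saddle_def
  proof
    fix z assume "z \<in> unit_sphere n"
    hence z: "z \<in> carrier_vec n" and zz: "z \<bullet> z = 1" unfolding unit_sphere_def by auto
    show "(\<forall>v\<in>tangent z \<inter> unit_sphere n. \<gamma> * \<beta> \<le> hess_f A \<beta> z v) \<or>
          \<gamma> * \<beta> \<le> sqrt (grad_f A \<beta> z \<bullet> grad_f A \<beta> z) \<or>
          (\<exists>v\<in>tangent z \<inter> unit_sphere n. hess_f A \<beta> z v \<le> - (\<gamma> * \<beta>))"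
    proof (cases "u \<bullet> z \<ge> 0")
      case True
      show ?thesis by (rule core[OF A sym u uu Au quad g0 b0 hb z zz True])
    next
      case False
      have u': "- u \<in> carrier_vec n" using u by simp
      have uu': "(- u) \<bullet> (- u) = 1" using u uu by simp
      have mu: "- u = (-1) \<cdot>\<^sub>v u" using u by (intro eq_vecI) auto
      have Au': "A *\<^sub>v (- u) = L \<cdot>\<^sub>v (- u)" unfolding mu using A u Au
        by (simp add: mult_mat_vec[of _ n n] smult_smult_assoc mult.commute)
      have quad': "x \<bullet> (A *\<^sub>v x) \<ge> M * (x \<bullet> x)" if "x \<in> carrier_vec n" "x \<bullet> (- u) = 0" for x
        using quad[of x] that u by simp
      have c': "(- u) \<bullet> z \<ge> 0" using False u z by simp
      show ?thesis by (rule core[OF A sym u' uu' Au' quad' g0 b0 hb z zz c'])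
    qed
  qed
qed

end
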